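(* Let $G=(V,E)$ be a temporal graph, $s\in V$, $t_s\in\mathbb{R}$, and $T$ the DFS tree produced by DFS-v2 on $G$ from $s$ with starting time $t_s$. Let $t_x\le t_y$ with $t_x\ge t_s$, let $v\neq s$, and let $O(v)$ be the set of occurrences of $v$ in $T$. Let $O'(v)=\{v_o\in O(v): t_{start}(v_o)\ge t_x,\ t_{end}(v_o)\le t_y\}$. If $O'(v)\neq\emptyset$ and $v_{\min}\in O'(v)$ minimizes $t_{end}(v_o)-t_{start}(v_o)$ over $O'(v)$, then the tree path from the root to $v_{\min}$ is a fastest path from $s$ to $v$ within $[t_x,t_y]$: it is a temporal path $P$ from $s$ to $v$ with $t_x\le t_{start}(P)$, $t_{end}(P)\le t_y$, and $t_{end}(P)-t_{start}(P)\le t_{end}(P')-t_{start}(P')$ for every temporal path $P'$ from $s$ to $v$ with $t_x\le t_{start}(P')$ and $t_{end}(P')\le t_y$. If $O'(v)=\emptyset$, then no temporal path $P'$ from $s$ to $v$ with $t_x\le t_{start}(P')$ and $t_{end}(P')\le t_y$ exists.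
   Context: A temporal graph is a pair $G=(V,E)$ where $V$ is a finite set of vertices and $E$ is a finite set of temporal edges, i.e. triples $(u,v,t)$ with $u,v\in V$, $u\neq v$, $t\in\mathbb{R}$ (the time at which the edge is active); distinct elements of $E$ are distinct triples. A temporal path from $x$ to $y$ is a sequence $P=\langle (w_1,w_2,t_1),\dots,(w_k,w_{k+1},t_k)\rangle$ of $k\ge1$ edges of $E$ with $w_1=x$, $w_{k+1}=y$ and $t_1\le t_2\le\dots\le t_k$; $t_{start}(P)=t_1$, $t_{end}(P)=t_k$. Temporal DFS-v2. The procedure maintains a value $\sigma(x)\in\mathbb{R}\cup\{\infty\}$ for every $x\in V$, initially $\infty$, and a set of already traversed edges, initially empty, and builds a rooted tree $T$ whose nodes are occurrences of vertices of $G$ (a vertex may occur several times). Each occurrence carries a label, namely the value assigned to $\sigma(x)$ when that occurrence was created. Start: create the root occurrence of $s$, set $\sigma(s)=t_s$, and make it current. Step (a): let $u$ be the vertex of the current occurrence, $\sigma_u$ its label, and $A$ the set of edges $(u,v,t)\in E$ not yet traversed with $\sigma_u\le t$. If $A=\emptyset$: if the current occurrence is the root, terminate; otherwise make its parent current and repeat step (a). If $A\neq\emptyset$, select an edge $e=(u,v,t)\in A$ with the largest time $t$ (ties arbitrary), mark it traversed and go to step (b). Step (b): if the current value $\sigma(v)>t$, create a new occurrence of $v$ as a child of the current occurrence joined by the tree edge $e$, set $\sigma(v):=t$ (its label), make it current and go to (a); otherwise go to (a) with the same current occurrence. Active interval: for a non-root occurrence $v_o$ of $T$, the tree edges on the path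 from the root to $v_o$ form a sequence $\langle (s=w_1,w_2,t_1),\dots,(w_k,w_{k+1}=v,t_k)\rangle$; set $t_{start}(v_o)=t_1$ and $t_{end}(v_o)=t_k$. *)

theory Defs
  imports Complex_Main "HOL-Library.Extended_Real"
begin

type_synonym 'v tedge = "'v \<times> 'v \<times> real"

definition src :: "'v tedge \<Rightarrow> 'v" where "src e = fst e"
definition dst :: "'v tedge \<Rightarrow> 'v" where "dst e = fst (snd e)"
definition tm  :: "'v tedge \<Rightarrow> real" where "tm e = snd (snd e)"

definition temporal_graph :: "'v set \<Rightarrow> 'v tedge set \<Rightarrow> bool" where
  "temporal_graph V E \<longleftrightarrow> finite V \<and> finite E \<and>
     (\<forall>e\<in>E. src e \<in> V \<and> dst e \<in> V \<and> src e \<noteq> dst e)"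

definition temporal_path :: "'v tedge set \<Rightarrow> 'v \<Rightarrow> 'v \<Rightarrow> 'v tedge list \<Rightarrow> bool" where
  "temporal_path E x y P \<longleftrightarrow> P \<noteq> [] \<and> set P \<subseteq> E \<and>
     src (hd P) = x \<and> dst (last P) = y \<and>
     (\<forall>i. Suc i < length P \<longrightarrow> dst (P ! i) = src (P ! Suc i) \<and> tm (P ! i) \<le> tm (P ! Suc i))"

definition t_start :: "'v tedge list \<Rightarrow> real" where "t_start P = tm (hd P)"
definition t_end :: "'v tedge list \<Rightarrow> real" where "t_end P = tm (last P)"

text \<open>An occurrence of the tree T is identified with the list of tree edges on
  the path from the root to it (the root is []).  Its parent is obtained by butlast.
  A state is (sigma, traversed edges, tree, current occurrence).\<close>

type_synonym 'v dfs_state = "('v \<Rightarrow> ereal) \<times> 'v tedge set \<times> 'v tedge list set \<times> 'v tedge list"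

definition occ_vertex :: "'v \<Rightarrow> 'v tedge list \<Rightarrow> 'v" where
  "occ_vertex s c = (if c = [] then s else dst (last c))"

definition occ_label :: "real \<Rightarrow> 'v tedge list \<Rightarrow> real" where
  "occ_label ts c = (if c = [] then ts else tm (last c))"

definition avail :: "'v tedge set \<Rightarrow> 'v \<Rightarrow> real \<Rightarrow> 'v tedge set \<Rightarrow> 'v tedge list \<Rightarrow> 'v tedge set" where
  "avail E s ts tr c = {e \<in> E. e \<notin> tr \<and> src e = occ_vertex s c \<and> occ_label ts c \<le> tm e}"

inductive dfs_step :: "'v tedge set \<Rightarrow> 'v \<Rightarrow> real \<Rightarrow> 'v dfs_state \<Rightarrow> 'v dfs_state \<Rightarrow> bool"
  for E s ts where
  backtrack: "avail E s ts tr c = {} \<Longrightarrow> c \<noteq> [] \<Longrightarrow>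
     dfs_step E s ts (\<sigma>, tr, T, c) (\<sigma>, tr, T, butlast c)"
| advance_new: "e \<in> avail E s ts tr c \<Longrightarrow> (\<forall>e'\<in>avail E s ts tr c. tm e' \<le> tm e) \<Longrightarrow>
     \<sigma> (dst e) > ereal (tm e) \<Longrightarrow>
     dfs_step E s ts (\<sigma>, tr, T, c)
       (\<sigma>(dst e := ereal (tm e)), insert e tr, insert (c @ [e]) T, c @ [e])"
| advance_old: "e \<in> avail E s ts tr c \<Longrightarrow> (\<forall>e'\<in>avail E s ts tr c. tm e' \<le> tm e) \<Longrightarrow>
     \<not> (\<sigma> (dst e) > ereal (tm e)) \<Longrightarrow>
     dfs_step E s ts (\<sigma>, tr, T, c) (\<sigma>, insert e tr, T, c)"

definition dfs_init :: "'v \<Rightarrow> real \<Rightarrow> 'v dfs_state" where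
  "dfs_init s ts = ((\<lambda>x. if x = s then ereal ts else \<infinity>), {}, {[]}, [])"

text \<open>T is a tree produced by a terminated run of DFS-v2 (for some resolution of ties).\<close>
definition dfs_tree :: "'v tedge set \<Rightarrow> 'v \<Rightarrow> real \<Rightarrow> 'v tedge list set \<Rightarrow> bool" where
  "dfs_tree E s ts T \<longleftrightarrow> (\<exists>\<sigma> tr. (dfs_step E s ts)\<^sup>*\<^sup>* (dfs_init s ts) (\<sigma>, tr, T, [])
                                  \<and> avail E s ts tr [] = {})"

text \<open>Occurrences of v in T (non-root, since the root is an occurrence of s).\<close>
definition occurrences :: "'v tedge list set \<Rightarrow> 'v \<Rightarrow> 'v tedge list set" where
  "occurrences T v = {c \<in> T. c \<noteq> [] \<and> dst (last c) = v}"

end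

theory Submission
  imports Defs
begin

definition good :: "'v tedge list set \<Rightarrow> real \<Rightarrow> 'v \<Rightarrow> real \<Rightarrow> bool" where
  "good T \<theta> w t \<longleftrightarrow> (\<exists>d\<in>T. d \<noteq> [] \<and> dst (last d) = w \<and> \<theta> \<le> tm (hd d) \<and> tm (last d) \<le> t)"

lemma good_mono: "good T \<theta> w t \<Longrightarrow> T \<subseteq> T' \<Longrightarrow> \<theta>' \<le> \<theta> \<Longrightarrow> good T' \<theta>' w t"
  unfolding good_def by (meson order_trans subsetD)

lemma avail_mono: "avail E s ts (insert e tr) c \<subseteq> avail E s ts tr c"
  unfolding avail_def by auto

lemma tp_single: "e \<in> E \<Longrightarrow> src e = x \<Longrightarrow> temporal_path E x (dst e) [e]"
  unfolding temporal_path_def by auto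

lemma tp_snoc:
  assumes "temporal_path E x y c" "e \<in> E" "src e = y" "tm (last c) \<le> tm e"
  shows "temporal_path E x (dst e) (c @ [e])"
proof -
  have ne: "c \<noteq> []" using assms(1) unfolding temporal_path_def by auto
  have "\<forall>i. Suc i < length (c @ [e]) \<longrightarrow> dst ((c @ [e]) ! i) = src ((c @ [e]) ! Suc i) \<and> tm ((c @ [e]) ! i) \<le> tm ((c @ [e]) ! Suc i)"
  proof (intro allI impI)
    fix i assume i: "Suc i < length (c @ [e])"
    show "dst ((c @ [e]) ! i) = src ((c @ [e]) ! Suc i) \<and> tm ((c @ [e]) ! i) \<le> tm ((c @ [e]) ! Suc i)"
    proof (cases "Suc i < length c")
      case True
      then show ?thesis using assms(1) unfolding temporal_path_def by (simp add: nth_append)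
    next
      case False
      then have "i = length c - 1" "Suc i = length c" using i by auto
      moreover have "c ! (length c - 1) = last c" using ne by (simp add: last_conv_nth)
      ultimately show ?thesis using assms ne unfolding temporal_path_def by (simp add: nth_append)
    qed
  qed
  then show ?thesis using assms ne unfolding temporal_path_def by auto
qed

definition dinv :: "'v tedge set \<Rightarrow> 'v \<Rightarrow> real \<Rightarrow> 'v tedge set \<Rightarrow> 'v tedge list set \<Rightarrow> 'v tedge list \<Rightarrow> 'v tedge list \<Rightarrow> bool" where
 "dinv E s ts tr T c d \<longleftrightarrow> butlast d \<in> T \<and> temporal_path E s (dst (last d)) d \<and> ts \<le> tm (last d)
        \<and> dst (last d) \<noteq> s
        \<and> (\<forall>e\<in>avail E s ts tr []. tm e \<le> tm (hd d))
        \<and> (c \<noteq> [] \<longrightarrow> tm (hd c) \<le> tm (hd d))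
        \<and> ((\<not>(\<exists>z. c = d @ z)) \<longrightarrow> (\<forall>e\<in>E. src e = dst (last d) \<longrightarrow> tm (last d) \<le> tm e \<longrightarrow>
              dst e = s \<or> good T (tm (hd d)) (dst e) (tm e)))"

definition inv :: "'v tedge set \<Rightarrow> 'v \<Rightarrow> real \<Rightarrow> 'v dfs_state \<Rightarrow> bool" where
 "inv E s ts st = (case st of (\<sigma>,tr,T,c) \<Rightarrow>
   [] \<in> T \<and> c \<in> T \<and>
   (\<forall>d\<in>T. d \<noteq> [] \<longrightarrow> dinv E s ts tr T c d) \<and>
   \<sigma> s = ereal ts \<and>
   (\<forall>x. x \<noteq> s \<longrightarrow> \<sigma> x = \<infinity> \<or> (\<exists>d\<in>T. d \<noteq> [] \<and> dst (last d) = x \<and> \<sigma> x = ereal (tm (last d)))) \<and>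
   (\<forall>e\<in>tr. \<sigma> (dst e) \<le> ereal (tm e)) \<and>
   (\<forall>e\<in>tr. src e = s \<longrightarrow> dst e = s \<or> good T (tm e) (dst e) (tm e)))"

lemma inv_init: "inv E s ts (dfs_init s ts)"
  unfolding inv_def dfs_init_def by simp

lemma hd_butlast': "butlast xs \<noteq> [] \<Longrightarrow> hd (butlast xs) = hd xs"
  by (cases xs) auto

lemma inv_backtrack:
  assumes I: "inv E s ts (\<sigma>, tr, T, c)" and av: "avail E s ts tr c = {}" and cne: "c \<noteq> []"
  shows "inv E s ts (\<sigma>, tr, T, butlast c)"
proof -
  from I have cT: "c \<in> T" 
    and S: "\<forall>d\<in>T. d \<noteq> [] \<longrightarrow> dinv E s ts tr T c d"
    and S2: "\<forall>x. x \<noteq> s \<longrightarrow> \<sigma> x = \<infinity> \<or> (\<exists>d\<in>T. d \<noteq> [] \<and> dst (last d) = x \<and> \<sigma> x = ereal (tm (last d)))"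
    and S8: "\<forall>e\<in>tr. \<sigma> (dst e) \<le> ereal (tm e)"
    unfolding inv_def by auto
  have blT: "butlast c \<in> T" using S cT cne unfolding dinv_def by blast
  have fin_c: "\<forall>e\<in>E. src e = dst (last c) \<longrightarrow> tm (last c) \<le> tm e \<longrightarrow>
              dst e = s \<or> good T (tm (hd c)) (dst e) (tm e)"
  proof (intro ballI impI)
    fix e assume eE: "e \<in> E" and se: "src e = dst (last c)" and te: "tm (last c) \<le> tm e"
    have "e \<notin> avail E s ts tr c" using av by blast
    then have etr: "e \<in> tr" using eE se te cne unfolding avail_def occ_vertex_def occ_label_def by simp
    show "dst e = s \<or> good T (tm (hd c)) (dst e) (tm e)"
    proof (cases "dst e = s")
      case False
      have le: "\<sigma> (dst e) \<le> ereal (tm e)" using S8 etr by auto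
      then have "\<sigma> (dst e) \<noteq> \<infinity>" by auto
      then obtain d where d: "d \<in> T" "d \<noteq> []" "dst (last d) = dst e" "\<sigma> (dst e) = ereal (tm (last d))"
        using S2 False by blast
      have "tm (hd c) \<le> tm (hd d)" using S d cne unfolding dinv_def by auto
      moreover have "tm (last d) \<le> tm e" using le d by auto
      ultimately show ?thesis unfolding good_def using d by blast
    qed simp
  qed
  have nf: "\<not>(\<exists>z. butlast c = d @ z) \<Longrightarrow> d = c \<or> \<not>(\<exists>z. c = d @ z)" for d
  proof -
    assume a: "\<not>(\<exists>z. butlast c = d @ z)"
    show "d = c \<or> \<not>(\<exists>z. c = d @ z)"
    proof (rule ccontr)
      assume "\<not> (d = c \<or> \<not>(\<exists>z. c = d @ z))"
      then obtain z where z: "c = d @ z" "z \<noteq> []" by auto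
      then have "butlast c = d @ butlast z" by (simp add: butlast_append)
      with a show False by blast
    qed
  qed
  have Snew: "\<forall>d\<in>T. d \<noteq> [] \<longrightarrow> dinv E s ts tr T (butlast c) d"
  proof (intro ballI impI)
    fix d assume dT: "d \<in> T" and dne: "d \<noteq> []"
    have D: "dinv E s ts tr T c d" using S dT dne by blast
    have h1: "butlast c \<noteq> [] \<longrightarrow> tm (hd (butlast c)) \<le> tm (hd d)"
      using D cne hd_butlast'[of c] unfolding dinv_def by auto
    have h2: "(\<not>(\<exists>z. butlast c = d @ z)) \<longrightarrow> (\<forall>e\<in>E. src e = dst (last d) \<longrightarrow> tm (last d) \<le> tm e \<longrightarrow>
              dst e = s \<or> good T (tm (hd d)) (dst e) (tm e))"
    proof
      assume "\<not>(\<exists>z. butlast c = d @ z)"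
      then have "d = c \<or> \<not>(\<exists>z. c = d @ z)" by (rule nf)
      then show "\<forall>e\<in>E. src e = dst (last d) \<longrightarrow> tm (last d) \<le> tm e \<longrightarrow>
              dst e = s \<or> good T (tm (hd d)) (dst e) (tm e)"
        using fin_c D unfolding dinv_def by blast
    qed
    show "dinv E s ts tr T (butlast c) d" using D h1 h2 unfolding dinv_def by blast
  qed
  show ?thesis
    using I blT Snew unfolding inv_def by auto
qed


lemma inv_common:
  assumes I: "inv E s ts (\<sigma>, tr, T, c)" and ea: "e \<in> avail E s ts tr c"
  shows "e \<in> E" "e \<notin> tr" "src e = occ_vertex s c" "ts \<le> tm e" "c \<noteq> [] \<Longrightarrow> src e = dst (last c)"
    "c \<noteq> [] \<Longrightarrow> tm (last c) \<le> tm e" "src e = s \<Longrightarrow> c = []"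
proof -
  from I have cT: "c \<in> T" and S: "\<forall>d\<in>T. d \<noteq> [] \<longrightarrow> dinv E s ts tr T c d"
    unfolding inv_def by auto
  show "e \<in> E" "e \<notin> tr" "src e = occ_vertex s c" using ea unfolding avail_def by auto
  have lab: "occ_label ts c \<le> tm e" using ea unfolding avail_def by auto
  show "c \<noteq> [] \<Longrightarrow> src e = dst (last c)" using ea unfolding avail_def occ_vertex_def by auto
  show "c \<noteq> [] \<Longrightarrow> tm (last c) \<le> tm e" using lab unfolding occ_label_def by auto
  show "ts \<le> tm e"
  proof (cases "c = []")
    case True then show ?thesis using lab unfolding occ_label_def by auto
  next
    case False
    then have "ts \<le> tm (last c)" using S cT unfolding dinv_def by blast
    then show ?thesis using lab False unfolding occ_label_def by auto
  qed
  show "src e = s \<Longrightarrow> c = []"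
  proof (rule ccontr)
    assume "src e = s" "c \<noteq> []"
    then have "dst (last c) = s" using ea unfolding avail_def occ_vertex_def by auto
    moreover have "dst (last c) \<noteq> s" using S cT \<open>c \<noteq> []\<close> unfolding dinv_def by blast
    ultimately show False by simp
  qed
qed

lemma inv_new:
  assumes I: "inv E s ts (\<sigma>, tr, T, c)" and ea: "e \<in> avail E s ts tr c"
    and mx: "\<forall>e'\<in>avail E s ts tr c. tm e' \<le> tm e" and lt: "\<sigma> (dst e) > ereal (tm e)"
  shows "inv E s ts (\<sigma>(dst e := ereal (tm e)), insert e tr, insert (c @ [e]) T, c @ [e])"
proof -
  from I have cT: "c \<in> T" and eT: "[] \<in> T" and S: "\<forall>d\<in>T. d \<noteq> [] \<longrightarrow> dinv E s ts tr T c d"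
    and S1: "\<sigma> s = ereal ts"
    and S2: "\<forall>x. x \<noteq> s \<longrightarrow> \<sigma> x = \<infinity> \<or> (\<exists>d\<in>T. d \<noteq> [] \<and> dst (last d) = x \<and> \<sigma> x = ereal (tm (last d)))"
    and S8: "\<forall>e\<in>tr. \<sigma> (dst e) \<le> ereal (tm e)"
    and S6: "\<forall>e\<in>tr. src e = s \<longrightarrow> dst e = s \<or> good T (tm e) (dst e) (tm e)"
    unfolding inv_def by auto
  note C = inv_common[OF I ea]
  define c' where "c' = c @ [e]"
  define T' where "T' = insert c' T"
  have TT': "T \<subseteq> T'" unfolding T'_def by auto
  have ds: "dst e \<noteq> s"
  proof
    assume "dst e = s" then have "ereal ts > ereal (tm e)" using lt S1 by simp
    then show False using C(4) by simp
  qed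
  have lastc': "last c' = e" unfolding c'_def by simp
  have hdc': "hd c' = (if c = [] then e else hd c)" unfolding c'_def by (cases c) auto
  have av': "avail E s ts (insert e tr) x \<subseteq> avail E s ts tr x" for x by (rule avail_mono)
  have hdle: "tm (hd c') \<le> tm (hd d)" if "d \<in> T" "d \<noteq> []" for d
  proof (cases "c = []")
    case True
    then have "e \<in> avail E s ts tr []" using ea by simp
    then show ?thesis using S that True hdc' unfolding dinv_def by auto
  next
    case False
    then show ?thesis using S that hdc' unfolding dinv_def by auto
  qed
  have Dc': "dinv E s ts (insert e tr) T' c' c'"
  proof -
    have "butlast c' \<in> T'" using cT unfolding c'_def T'_def by simp
    moreover have "temporal_path E s (dst (last c')) c'"
    proof (cases "c = []")
      case True then show ?thesis using tp_single[OF C(1)] C(3) unfolding c'_def occ_vertex_def by simp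
    next
      case False
      then have "temporal_path E s (dst (last c)) c" using S cT unfolding dinv_def by blast
      then show ?thesis using tp_snoc[OF _ C(1) C(5)[OF False] C(6)[OF False]] unfolding c'_def by simp
    qed
    moreover have "\<forall>e'\<in>avail E s ts (insert e tr) []. tm e' \<le> tm (hd c')"
    proof
      fix e' assume e': "e' \<in> avail E s ts (insert e tr) []"
      then have e'a: "e' \<in> avail E s ts tr []" using av' by blast
      show "tm e' \<le> tm (hd c')"
      proof (cases "c = []")
        case True then show ?thesis using mx e'a hdc' by auto
      next
        case False then show ?thesis using S cT e'a hdc' unfolding dinv_def by auto
      qed
    qed
    ultimately show ?thesis unfolding dinv_def using lastc' C(4) ds by auto
  qed
  have Snew: "\<forall>d\<in>T'. d \<noteq> [] \<longrightarrow> dinv E s ts (insert e tr) T' c' d"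
  proof (intro ballI impI)
    fix d assume dT: "d \<in> T'" and dne: "d \<noteq> []"
    show "dinv E s ts (insert e tr) T' c' d"
    proof (cases "d = c'")
      case True then show ?thesis using Dc' by simp
    next
      case False
      then have dT0: "d \<in> T" using dT unfolding T'_def by auto
      have D: "dinv E s ts tr T c d" using S dT0 dne by blast
      have h2: "(\<not>(\<exists>z. c' = d @ z)) \<longrightarrow> (\<forall>e\<in>E. src e = dst (last d) \<longrightarrow> tm (last d) \<le> tm e \<longrightarrow>
              dst e = s \<or> good T' (tm (hd d)) (dst e) (tm e))"
      proof (intro impI)
        assume nz: "\<not>(\<exists>z. c' = d @ z)"
        have "\<not>(\<exists>z. c = d @ z)"
        proof
          assume "\<exists>z. c = d @ z" then obtain z where "c = d @ z" by blast
          then have "c' = d @ (z @ [e])" unfolding c'_def by simp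
          with nz show False by blast
        qed
        then have "\<forall>e\<in>E. src e = dst (last d) \<longrightarrow> tm (last d) \<le> tm e \<longrightarrow>
              dst e = s \<or> good T (tm (hd d)) (dst e) (tm e)" using D unfolding dinv_def by blast
        then show "\<forall>e\<in>E. src e = dst (last d) \<longrightarrow> tm (last d) \<le> tm e \<longrightarrow>
              dst e = s \<or> good T' (tm (hd d)) (dst e) (tm e)"
          using good_mono[OF _ TT' order_refl] by blast
      qed
      have "butlast d \<in> T'" using D TT' unfolding dinv_def by blast
      moreover have "\<forall>e'\<in>avail E s ts (insert e tr) []. tm e' \<le> tm (hd d)" using D av' unfolding dinv_def by blast
      moreover have "tm (hd c') \<le> tm (hd d)" using hdle dT0 dne by blast
      ultimately show ?thesis using D h2 unfolding dinv_def by blast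
    qed
  qed
  have S1': "(\<sigma>(dst e := ereal (tm e))) s = ereal ts" using S1 ds by simp
  have S2': "\<forall>x. x \<noteq> s \<longrightarrow> (\<sigma>(dst e := ereal (tm e))) x = \<infinity> \<or>
       (\<exists>d\<in>T'. d \<noteq> [] \<and> dst (last d) = x \<and> (\<sigma>(dst e := ereal (tm e))) x = ereal (tm (last d)))"
  proof (intro allI impI)
    fix x assume xs: "x \<noteq> s"
    show "(\<sigma>(dst e := ereal (tm e))) x = \<infinity> \<or>
       (\<exists>d\<in>T'. d \<noteq> [] \<and> dst (last d) = x \<and> (\<sigma>(dst e := ereal (tm e))) x = ereal (tm (last d)))"
    proof (cases "x = dst e")
      case True
      then show ?thesis using lastc' unfolding T'_def c'_def by auto
    next
      case False
      then show ?thesis using S2 xs TT' by auto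
    qed
  qed
  have S8': "\<forall>e'\<in>insert e tr. (\<sigma>(dst e := ereal (tm e))) (dst e') \<le> ereal (tm e')"
  proof
    fix e' assume e': "e' \<in> insert e tr"
    show "(\<sigma>(dst e := ereal (tm e))) (dst e') \<le> ereal (tm e')"
    proof (cases "dst e' = dst e")
      case True
      show ?thesis
      proof (cases "e' = e")
        case False
        then have "e' \<in> tr" using e' by auto
        then have "\<sigma> (dst e) \<le> ereal (tm e')" using S8 True by auto
        then have "ereal (tm e) \<le> ereal (tm e')" using lt by (meson less_imp_le order_trans)
        then show ?thesis using True by simp
      qed (simp)
    next
      case False
      then have "e' \<in> tr" using e' by auto
      then show ?thesis using S8 False by auto
    qed
  qed
  have S6': "\<forall>e'\<in>insert e tr. src e' = s \<longrightarrow> dst e' = s \<or> good T' (tm e') (dst e') (tm e')"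
  proof (intro ballI impI)
    fix e' assume e': "e' \<in> insert e tr" and se': "src e' = s"
    show "dst e' = s \<or> good T' (tm e') (dst e') (tm e')"
    proof (cases "e' = e")
      case True
      then have "c = []" using C(7) se' by simp
      then have "c' = [e]" unfolding c'_def by simp
      then show ?thesis using True unfolding good_def T'_def by auto
    next
      case False
      then have "e' \<in> tr" using e' by auto
      then show ?thesis using S6 se' good_mono[OF _ TT' order_refl] by blast
    qed
  qed
  have "[] \<in> T'" "c' \<in> T'" using eT unfolding T'_def by auto
  then show ?thesis using Snew S1' S2' S8' S6' unfolding inv_def c'_def T'_def by simp
qed


lemma inv_old:
  assumes I: "inv E s ts (\<sigma>, tr, T, c)" and ea: "e \<in> avail E s ts tr c"
    and nlt: "\<not> (\<sigma> (dst e) > ereal (tm e))"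
  shows "inv E s ts (\<sigma>, insert e tr, T, c)"
proof -
  from I have cT: "c \<in> T" and eT: "[] \<in> T" and S: "\<forall>d\<in>T. d \<noteq> [] \<longrightarrow> dinv E s ts tr T c d"
    and S1: "\<sigma> s = ereal ts"
    and S2: "\<forall>x. x \<noteq> s \<longrightarrow> \<sigma> x = \<infinity> \<or> (\<exists>d\<in>T. d \<noteq> [] \<and> dst (last d) = x \<and> \<sigma> x = ereal (tm (last d)))"
    and S8: "\<forall>e\<in>tr. \<sigma> (dst e) \<le> ereal (tm e)"
    and S6: "\<forall>e\<in>tr. src e = s \<longrightarrow> dst e = s \<or> good T (tm e) (dst e) (tm e)"
    unfolding inv_def by auto
  note C = inv_common[OF I ea]
  have le: "\<sigma> (dst e) \<le> ereal (tm e)" using nlt by simp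
  have av': "avail E s ts (insert e tr) x \<subseteq> avail E s ts tr x" for x by (rule avail_mono)
  have Snew: "\<forall>d\<in>T. d \<noteq> [] \<longrightarrow> dinv E s ts (insert e tr) T c d"
  proof (intro ballI impI)
    fix d assume "d \<in> T" "d \<noteq> []"
    then have D: "dinv E s ts tr T c d" using S by blast
    have X: "\<forall>e'\<in>avail E s ts (insert e tr) []. tm e' \<le> tm (hd d)"
      using D av'[of "[]"] unfolding dinv_def by blast
    show "dinv E s ts (insert e tr) T c d"
      unfolding dinv_def
      apply (insert D[unfolded dinv_def] X)
      apply (elim conjE)
      apply (intro conjI)
            apply assumption+
      done
  qed
  have S8': "\<forall>e'\<in>insert e tr. \<sigma> (dst e') \<le> ereal (tm e')" using S8 le by blast
  have S6': "\<forall>e'\<in>insert e tr. src e' = s \<longrightarrow> dst e' = s \<or> good T (tm e') (dst e') (tm e')"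
  proof (intro ballI impI)
    fix e' assume e': "e' \<in> insert e tr" and se': "src e' = s"
    show "dst e' = s \<or> good T (tm e') (dst e') (tm e')"
    proof (cases "e' = e")
      case True
      then have c0: "c = []" using C(7) se' by simp
      show ?thesis
      proof (cases "dst e = s")
        case False
        have "\<sigma> (dst e) \<noteq> \<infinity>" using le by auto
        then obtain d where d: "d \<in> T" "d \<noteq> []" "dst (last d) = dst e" "\<sigma> (dst e) = ereal (tm (last d))"
          using S2 False by blast
        have "tm e \<le> tm (hd d)" using S d ea c0 unfolding dinv_def by auto
        moreover have "tm (last d) \<le> tm e" using le d by auto
        ultimately show ?thesis unfolding good_def using d True by blast
      qed (simp add: True)
    next
      case False
      then have "e' \<in> tr" using e' by auto
      then show ?thesis using S6 se' by blast
    qed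
  qed
  show ?thesis using cT eT Snew S1 S2 S8' S6' unfolding inv_def by simp
qed

lemma inv_step: "dfs_step E s ts st st' \<Longrightarrow> inv E s ts st \<Longrightarrow> inv E s ts st'"
proof (erule dfs_step.cases)
  fix tr c \<sigma> T assume "st = (\<sigma>, tr, T, c)" "st' = (\<sigma>, tr, T, butlast c)" "avail E s ts tr c = {}" "c \<noteq> []"
    "inv E s ts st"
  then show "inv E s ts st'" using inv_backtrack[of E s ts \<sigma> tr T c] by simp
next
  fix e tr c \<sigma> T assume "st = (\<sigma>, tr, T, c)"
    "st' = (\<sigma>(dst e := ereal (tm e)), insert e tr, insert (c @ [e]) T, c @ [e])"
    "e \<in> avail E s ts tr c" "\<forall>e'\<in>avail E s ts tr c. tm e' \<le> tm e" "ereal (tm e) < \<sigma> (dst e)"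
    "inv E s ts st"
  then show "inv E s ts st'" using inv_new[of E s ts \<sigma> tr T c e] by simp
next
  fix e tr c \<sigma> T assume "st = (\<sigma>, tr, T, c)" "st' = (\<sigma>, insert e tr, T, c)"
    "e \<in> avail E s ts tr c" "\<forall>e'\<in>avail E s ts tr c. tm e' \<le> tm e" "\<not> ereal (tm e) < \<sigma> (dst e)"
    "inv E s ts st"
  then show "inv E s ts st'" using inv_old[of E s ts \<sigma> tr T c e] by simp
qed

lemma inv_reach: "(dfs_step E s ts)\<^sup>*\<^sup>* (dfs_init s ts) st \<Longrightarrow> inv E s ts st"
proof (induction rule: rtranclp_induct)
  case base then show ?case by (rule inv_init)
next
  case (step y z) then show ?case using inv_step[of E s ts y z] by simp
qed

lemma tp_times:
  assumes "temporal_path E x y P" "k < length P"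
  shows "tm (hd P) \<le> tm (P ! k)"
  using assms(2)
proof (induction k)
  case 0 then show ?case using assms(1) unfolding temporal_path_def by (simp add: hd_conv_nth)
next
  case (Suc k)
  then have "tm (P ! k) \<le> tm (P ! Suc k)" using assms(1) unfolding temporal_path_def by blast
  then show ?case using Suc by simp
qed

lemma key:
  assumes fin: "dfs_tree E s ts T" and P: "temporal_path E s v P" and vs: "v \<noteq> s"
    and st: "ts \<le> t_start P"
  shows "\<exists>d\<in>T. d \<noteq> [] \<and> dst (last d) = v \<and> t_start P \<le> tm (hd d) \<and> tm (last d) \<le> t_end P"
proof -
  obtain \<sigma> tr where r: "(dfs_step E s ts)\<^sup>*\<^sup>* (dfs_init s ts) (\<sigma>, tr, T, [])"
    and av: "avail E s ts tr [] = {}" using fin unfolding dfs_tree_def by blast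
  have I: "inv E s ts (\<sigma>, tr, T, [])" using inv_reach[OF r] .
  then have S: "\<forall>d\<in>T. d \<noteq> [] \<longrightarrow> dinv E s ts tr T [] d"
    and S6: "\<forall>e\<in>tr. src e = s \<longrightarrow> dst e = s \<or> good T (tm e) (dst e) (tm e)"
    unfolding inv_def by auto
  define \<theta> where "\<theta> = tm (hd P)"
  have Pne: "P \<noteq> []" and PE: "set P \<subseteq> E" using P unfolding temporal_path_def by auto
  have root: "dst e = s \<or> good T \<theta> (dst e) (tm e)" if "e \<in> E" "src e = s" "\<theta> \<le> tm e" for e
  proof -
    have "ts \<le> tm e" using st that unfolding t_start_def \<theta>_def by simp
    then have "e \<notin> avail E s ts tr []" using av by blast
    then have "e \<in> tr" using that \<open>ts \<le> tm e\<close> unfolding avail_def occ_vertex_def occ_label_def by simp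
    then have "dst e = s \<or> good T (tm e) (dst e) (tm e)" using S6 that by blast
    then show ?thesis using good_mono[of T "tm e" "dst e" "tm e" T \<theta>] that(3) by blast
  qed
  have main: "k < length P \<Longrightarrow> dst (P ! k) = s \<or> good T \<theta> (dst (P ! k)) (tm (P ! k))" for k
  proof (induction k)
    case 0
    have "P ! 0 \<in> set P" using Pne by simp
    then have "P ! 0 \<in> E" using PE by blast
    moreover have "src (P ! 0) = s" using P Pne unfolding temporal_path_def by (simp add: hd_conv_nth)
    moreover have "\<theta> \<le> tm (P ! 0)" unfolding \<theta>_def using Pne by (simp add: hd_conv_nth)
    ultimately show ?case using root by blast
  next
    case (Suc k)
    define e where "e = P ! Suc k"
    have "e \<in> set P" using Suc.prems unfolding e_def by simp
    then have eE: "e \<in> E" using PE by blast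
    have con: "dst (P ! k) = src e" "tm (P ! k) \<le> tm e" using P Suc.prems unfolding temporal_path_def e_def by blast+
    have th: "\<theta> \<le> tm e" using tp_times[OF P Suc.prems] unfolding \<theta>_def e_def .
    have IH: "dst (P ! k) = s \<or> good T \<theta> (dst (P ! k)) (tm (P ! k))" using Suc by simp
    show ?case
    proof (cases "dst (P ! k) = s")
      case True then show ?thesis using root[OF eE _ th] con unfolding e_def by simp
    next
      case False
      then obtain d where d: "d \<in> T" "d \<noteq> []" "dst (last d) = src e" "\<theta> \<le> tm (hd d)" "tm (last d) \<le> tm (P ! k)"
        using IH con unfolding good_def by auto
      have "dst e = s \<or> good T (tm (hd d)) (dst e) (tm e)"
        using S d con eE unfolding dinv_def by auto
      then show ?thesis using good_mono[of T "tm (hd d)" "dst e" "tm e" T \<theta>] d(4) unfolding e_def by blast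
    qed
  qed
  have "length P - 1 < length P" using Pne by simp
  moreover have "P ! (length P - 1) = last P" using Pne by (simp add: last_conv_nth)
  ultimately have "dst (last P) = s \<or> good T \<theta> (dst (last P)) (tm (last P))" using main by metis
  moreover have "dst (last P) = v" using P unfolding temporal_path_def by simp
  ultimately show ?thesis using vs unfolding good_def \<theta>_def t_start_def t_end_def by auto
qed

lemma tree_paths:
  assumes fin: "dfs_tree E s ts T" and "d \<in> T" "d \<noteq> []"
  shows "temporal_path E s (dst (last d)) d"
proof -
  obtain \<sigma> tr where r: "(dfs_step E s ts)\<^sup>*\<^sup>* (dfs_init s ts) (\<sigma>, tr, T, [])"
    using fin unfolding dfs_tree_def by blast
  have "inv E s ts (\<sigma>, tr, T, [])" using inv_reach[OF r] .
  then show ?thesis using assms unfolding inv_def dinv_def by auto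
qed

theorem mainTheorem9:
  fixes V :: "'v set" and E :: "'v tedge set" and s v :: 'v
    and ts tx ty :: real and T :: "'v tedge list set"
  assumes "temporal_graph V E" and "s \<in> V" and "v \<in> V" and "v \<noteq> s"
    and "dfs_tree E s ts T"
    and "tx \<le> ty" and "ts \<le> tx"
  defines "O' \<equiv> {c \<in> occurrences T v. t_start c \<ge> tx \<and> t_end c \<le> ty}"
  shows "(\<forall>vmin \<in> O'. (\<forall>c \<in> O'. t_end vmin - t_start vmin \<le> t_end c - t_start c) \<longrightarrow>
            temporal_path E s v vmin \<and> tx \<le> t_start vmin \<and> t_end vmin \<le> ty \<and>
            (\<forall>P'. temporal_path E s v P' \<and> tx \<le> t_start P' \<and> t_end P' \<le> ty \<longrightarrow>
                  t_end vmin - t_start vmin \<le> t_end P' - t_start P'))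
       \<and> (O' = {} \<longrightarrow> \<not> (\<exists>P'. temporal_path E s v P' \<and> tx \<le> t_start P' \<and> t_end P' \<le> ty))"
proof
  have K: "\<exists>d\<in>O'. t_start P' \<le> t_start d \<and> t_end d \<le> t_end P'"
    if h1: "temporal_path E s v P'" and h2: "tx \<le> t_start P'" and h3: "t_end P' \<le> ty" for P'
  proof -
    obtain d where d: "d \<in> T" "d \<noteq> []" "dst (last d) = v" "t_start P' \<le> tm (hd d)" "tm (last d) \<le> t_end P'"
      using key[OF assms(5) h1 assms(4)] h2 assms(7) by fastforce
    have "d \<in> O'" using d h2 h3 unfolding O'_def occurrences_def t_start_def t_end_def by auto
    then show ?thesis using d unfolding t_start_def t_end_def by auto
  qed
  show "\<forall>vmin \<in> O'. (\<forall>c \<in> O'. t_end vmin - t_start vmin \<le> t_end c - t_start c) \<longrightarrow>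
            temporal_path E s v vmin \<and> tx \<le> t_start vmin \<and> t_end vmin \<le> ty \<and>
            (\<forall>P'. temporal_path E s v P' \<and> tx \<le> t_start P' \<and> t_end P' \<le> ty \<longrightarrow>
                  t_end vmin - t_start vmin \<le> t_end P' - t_start P')"
  proof (intro ballI impI conjI allI)
    fix vmin assume vm: "vmin \<in> O'" and mn: "\<forall>c \<in> O'. t_end vmin - t_start vmin \<le> t_end c - t_start c"
    have vT: "vmin \<in> T" "vmin \<noteq> []" "dst (last vmin) = v" using vm unfolding O'_def occurrences_def by auto
    show "temporal_path E s v vmin" using tree_paths[OF assms(5) vT(1,2)] vT(3) by simp
    show "tx \<le> t_start vmin" "t_end vmin \<le> ty" using vm unfolding O'_def by auto
    fix P' assume "temporal_path E s v P' \<and> tx \<le> t_start P' \<and> t_end P' \<le> ty"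
    then obtain d where "d \<in> O'" "t_start P' \<le> t_start d" "t_end d \<le> t_end P'" using K by blast
    then show "t_end vmin - t_start vmin \<le> t_end P' - t_start P'" using mn by force
  qed
  show "O' = {} \<longrightarrow> \<not> (\<exists>P'. temporal_path E s v P' \<and> tx \<le> t_start P' \<and> t_end P' \<le> ty)"
    using K by blast
qed

end
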